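(* Let $b\in\mathbb{N}$, $b\ge 1$, and $n=\frac{2^b}{2}+b$. Then a DBN with visible layer of width $n$ and $m=\frac{2^n}{2(n-b)}$ hidden layers, each of width $n$, is a universal approximator of distributions on $\{0,1\}^n$: for every probability distribution $p$ on $\{0,1\}^n$ and every $\varepsilon>0$ there exist parameters of the DBN whose visible marginal distribution $q$ satisfies $D(p\,\|\,q)<\varepsilon$.
   Context: A Deep Belief Network (DBN) with layers $h^0,h^1,\dots,h^m$, each $h^i\in\{0,1\}^n$ (here $h^0$ is the visible layer and $h^1,\dots,h^m$ are the hidden layers), has parameters: for the top two layers, $W\in\mathbb{R}^{n\times n}$, $B,C\in\mathbb{R}^n$; for each $i\in\{0,\dots,m-2\}$, a matrix $W^i\in\mathbb{R}^{n\times n}$ and offset vector $c^i\in\mathbb{R}^n$. Its joint distribution is $P(h^0,\dots,h^m)=P(h^{m-1},h^m)\prod_{i=0}^{m-2}P(h^i\mid h^{i+1})$, where $P(h^{m-1},h^m)=\frac{1}{Z}\exp\big((h^m)^TWh^{m-1}+B\cdot h^{m-1}+C\cdot h^m\big)$ (a Restricted Boltzmann Machine) and $P(h^i\mid h^{i+1})=\prod_{j=1}^n P(h^i_j\mid h^{i+1})$ with $P(h^i_j=1\mid h^{i+1})=\sigma\big(\sum_k W^i_{jk}h^{i+1}_k+c^i_j\big)$, $\sigma(x)=1/(1+e^{-x})$. The visible marginal distribution is $q(h^0)=\sum_{h^1,\dots,h^m}P(h^0,\dots,h^m)$. $D(p\|q)$ is the Kullback–Leibler divergence. *)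

theory Defs
  imports "HOL-Analysis.Analysis"
begin

text \<open>Binary states: the cube {0,1}^n, represented by functions nat => bool
  that are False outside {0..<n}.\<close>
definition cube :: "nat \<Rightarrow> (nat \<Rightarrow> bool) set" where
  "cube n = {x. \<forall>i. n \<le> i \<longrightarrow> \<not> x i}"

definition sigmoid :: "real \<Rightarrow> real" where
  "sigmoid x = 1 / (1 + exp (- x))"

text \<open>Parameters of a DBN with layers h^0..h^m of width n:
  W, B, C for the top RBM on (h^(m-1), h^m); Ws i and cs i (i = 0..m-2) for the
  conditional P(h^i | h^(i+1)).\<close>

definition rbm_energy :: "nat \<Rightarrow> (nat \<Rightarrow> nat \<Rightarrow> real) \<Rightarrow> (nat \<Rightarrow> real) \<Rightarrow> (nat \<Rightarrow> real)
    \<Rightarrow> (nat \<Rightarrow> bool) \<Rightarrow> (nat \<Rightarrow> bool) \<Rightarrow> real" where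
  "rbm_energy n W B C v h =
     (\<Sum>j<n. \<Sum>k<n. of_bool (h j) * W j k * of_bool (v k))
     + (\<Sum>k<n. B k * of_bool (v k)) + (\<Sum>j<n. C j * of_bool (h j))"

definition rbm_prob :: "nat \<Rightarrow> (nat \<Rightarrow> nat \<Rightarrow> real) \<Rightarrow> (nat \<Rightarrow> real) \<Rightarrow> (nat \<Rightarrow> real)
    \<Rightarrow> (nat \<Rightarrow> bool) \<Rightarrow> (nat \<Rightarrow> bool) \<Rightarrow> real" where
  "rbm_prob n W B C v h =
     exp (rbm_energy n W B C v h) /
     (\<Sum>(v', h') \<in> cube n \<times> cube n. exp (rbm_energy n W B C v' h'))"

definition cond_prob :: "nat \<Rightarrow> (nat \<Rightarrow> nat \<Rightarrow> real) \<Rightarrow> (nat \<Rightarrow> real)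
    \<Rightarrow> (nat \<Rightarrow> bool) \<Rightarrow> (nat \<Rightarrow> bool) \<Rightarrow> real" where
  "cond_prob n Wi ci x y =
     (\<Prod>j<n. let s = sigmoid ((\<Sum>k<n. Wi j k * of_bool (y k)) + ci j)
             in if x j then s else 1 - s)"

definition dbn_joint :: "nat \<Rightarrow> nat \<Rightarrow> (nat \<Rightarrow> nat \<Rightarrow> real) \<Rightarrow> (nat \<Rightarrow> real) \<Rightarrow> (nat \<Rightarrow> real)
    \<Rightarrow> (nat \<Rightarrow> nat \<Rightarrow> nat \<Rightarrow> real) \<Rightarrow> (nat \<Rightarrow> nat \<Rightarrow> real)
    \<Rightarrow> (nat \<Rightarrow> (nat \<Rightarrow> bool)) \<Rightarrow> real" where
  "dbn_joint n m W B C Ws cs H =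
     rbm_prob n W B C (H (m - 1)) (H m) *
     (\<Prod>i<m - 1. cond_prob n (Ws i) (cs i) (H i) (H (Suc i)))"

definition dbn_visible :: "nat \<Rightarrow> nat \<Rightarrow> (nat \<Rightarrow> nat \<Rightarrow> real) \<Rightarrow> (nat \<Rightarrow> real) \<Rightarrow> (nat \<Rightarrow> real)
    \<Rightarrow> (nat \<Rightarrow> nat \<Rightarrow> nat \<Rightarrow> real) \<Rightarrow> (nat \<Rightarrow> nat \<Rightarrow> real)
    \<Rightarrow> (nat \<Rightarrow> bool) \<Rightarrow> real" where
  "dbn_visible n m W B C Ws cs v =
     (\<Sum>H \<in> PiE {1..m} (\<lambda>_. cube n). dbn_joint n m W B C Ws cs (H(0 := v)))"

definition is_distribution :: "nat \<Rightarrow> ((nat \<Rightarrow> bool) \<Rightarrow> real) \<Rightarrow> bool" where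
  "is_distribution n p \<longleftrightarrow> (\<forall>x \<in> cube n. 0 \<le> p x) \<and> (\<Sum>x \<in> cube n. p x) = 1"

definition KL_div :: "nat \<Rightarrow> ((nat \<Rightarrow> bool) \<Rightarrow> real) \<Rightarrow> ((nat \<Rightarrow> bool) \<Rightarrow> real) \<Rightarrow> ereal" where
  "KL_div n p q =
     (if \<exists>x \<in> cube n. 0 < p x \<and> q x = 0 then \<infinity>
      else ereal (\<Sum>x \<in> {x \<in> cube n. 0 < p x}. p x * ln (p x / q x)))"

end

theory Submission
  imports Defs
begin

lemma finite_cube: "finite (cube k)"
proof -
  have "bij_betw (\<lambda>x. {i. x i}) (cube k) (Pow {..<k})"
  proof -
    have "x \<in> (\<lambda>x. {i. x i}) ` cube k" if "x \<subseteq> {..<k}" for x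
      using that unfolding cube_def by (auto intro!: image_eqI[of _ _ "\<lambda>i. i \<in> x"])
    then show ?thesis unfolding bij_betw_def inj_on_def cube_def
      by (auto simp: fun_eq_iff) (meson not_le)
  qed
  then show ?thesis using bij_betw_finite by blast
qed

lemma card_cube: "card (cube k) = 2 ^ k"
proof -
  have "bij_betw (\<lambda>x. {i. x i}) (cube k) (Pow {..<k})"
  proof -
    have "x \<in> (\<lambda>x. {i. x i}) ` cube k" if "x \<subseteq> {..<k}" for x
      using that unfolding cube_def by (auto intro!: image_eqI[of _ _ "\<lambda>i. i \<in> x"])
    then show ?thesis unfolding bij_betw_def inj_on_def cube_def
      by (auto simp: fun_eq_iff) (meson not_le)
  qed
  then show ?thesis using bij_betw_same_card card_Pow by fastforce
qed

fun down :: "(nat \<Rightarrow> (nat\<Rightarrow>bool) \<Rightarrow> (nat\<Rightarrow>bool) \<Rightarrow> real) \<Rightarrow> (nat\<Rightarrow>bool) set \<Rightarrow> nat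
   \<Rightarrow> ((nat\<Rightarrow>bool) \<Rightarrow> real) \<Rightarrow> (nat\<Rightarrow>bool) \<Rightarrow> real" where
  "down k C 0 f = f"
| "down k C (Suc N) f = down k C N (\<lambda>x. \<Sum>y\<in>C. k N x y * f y)"

lemma sum_PiE_insert:
  assumes "a \<notin> S"
  shows "(\<Sum>H\<in>PiE (insert a S) (\<lambda>_. C). F H) = (\<Sum>g\<in>PiE S (\<lambda>_. C). \<Sum>y\<in>C. F (g(a:=y)))"
proof -
  have "(\<Sum>H\<in>PiE (insert a S) (\<lambda>_. C). F H) = (\<Sum>(y,g)\<in>C \<times> PiE S (\<lambda>_. C). F (g(a:=y)))"
    unfolding PiE_insert_eq
    by (subst sum.reindex[OF inj_combinator[OF assms]]) (simp add: case_prod_unfold)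
  also have "\<dots> = (\<Sum>y\<in>C. \<Sum>g\<in>PiE S (\<lambda>_. C). F (g(a:=y)))"
    by (simp add: sum.cartesian_product)
  also have "\<dots> = (\<Sum>g\<in>PiE S (\<lambda>_. C). \<Sum>y\<in>C. F (g(a:=y)))"
    by (rule sum.swap)
  finally show ?thesis .
qed

lemma chain:
  "(\<Sum>H\<in>PiE {1..N} (\<lambda>_. C). f ((H(0:=v)) N) * (\<Prod>i<N. k i ((H(0:=v)) i) ((H(0:=v)) (Suc i))))
     = down k C N f v"
proof (induction N arbitrary: f)
  case 0
  then show ?case by simp
next
  case (Suc N)
  have ins: "{1..Suc N} = insert (Suc N) {1..N}" by auto
  have "(\<Sum>H\<in>PiE {1..Suc N} (\<lambda>_. C). f ((H(0:=v)) (Suc N)) * (\<Prod>i<Suc N. k i ((H(0:=v)) i) ((H(0:=v)) (Suc i))))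
      = (\<Sum>g\<in>PiE {1..N} (\<lambda>_. C). \<Sum>y\<in>C. f y * ((\<Prod>i<N. k i ((g(0:=v)) i) ((g(0:=v)) (Suc i))) * k N ((g(0:=v)) N) y))"
  proof -
    have e: "\<And>g y. (g(Suc N := y))(0 := v) = (g(0:=v))(Suc N := y)" by (auto simp: fun_eq_iff)
    have p: "\<And>g y. (\<Prod>i<N. k i (((g(0:=v))(Suc N := y)) i) (((g(0:=v))(Suc N := y)) (Suc i)))
         = (\<Prod>i<N. k i ((g(0:=v)) i) ((g(0:=v)) (Suc i)))"
      by (rule prod.cong) auto
    show ?thesis unfolding ins
      by (subst sum_PiE_insert) (auto simp: e p)
  qed
  also have "\<dots> = (\<Sum>g\<in>PiE {1..N} (\<lambda>_. C). (\<lambda>x. \<Sum>y\<in>C. k N x y * f y) ((g(0:=v)) N) * (\<Prod>i<N. k i ((g(0:=v)) i) ((g(0:=v)) (Suc i))))"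
    by (auto simp: sum_distrib_right mult_ac intro!: sum.cong)
  also have "\<dots> = down k C (Suc N) f v" using Suc.IH by simp
  finally show ?case .
qed


lemma lin_at_top: "u > 0 \<Longrightarrow> filterlim (\<lambda>K::nat. real K * u + v) at_top sequentially"
proof -
  assume u: "u > 0"
  have "filterlim (\<lambda>K::nat. real K * u) at_top sequentially"
    by (rule filterlim_at_top_mult_tendsto_pos[OF tendsto_const u filterlim_real_sequentially])
  then have "filterlim (\<lambda>K::nat. v + real K * u) at_top sequentially"
    by (rule filterlim_tendsto_add_at_top[OF tendsto_const])
  then show ?thesis by (simp add: add.commute)
qed

lemma lin_at_bot: "u < 0 \<Longrightarrow> filterlim (\<lambda>K::nat. real K * u + v) at_bot sequentially"
proof -
  assume "u < 0"
  then have "filterlim (\<lambda>K::nat. real K * (-u) + (-v)) at_top sequentially" by (intro lin_at_top) auto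
  then show ?thesis
    by (subst filterlim_uminus_at_bot) (simp add: algebra_simps)
qed

lemma exp_lim: "a \<le> 0 \<Longrightarrow> ((\<lambda>K::nat. exp (real K * a + w)) \<longlongrightarrow> (if a = 0 then exp w else 0)) sequentially"
proof (cases "a = 0")
  case False
  assume "a \<le> 0"
  with False have "a < 0" by simp
  then have "((\<lambda>K::nat. exp (real K * a + w)) \<longlongrightarrow> 0) sequentially"
    using filterlim_compose[OF exp_at_bot lin_at_bot] by blast
  then show ?thesis using False by simp
qed simp

lemma sig_lim: "((\<lambda>K::nat. sigmoid (real K * u + v)) \<longlongrightarrow>
   (if u > 0 then 1 else if u < 0 then 0 else sigmoid v)) sequentially"
proof -
  have s: "sigmoid x = 1 / (1 + exp (real 0 * 0 + - x))" for x by (simp add: sigmoid_def)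
  consider "u > 0" | "u < 0" | "u = 0" by linarith
  then show ?thesis
  proof cases
    case 1
    have "((\<lambda>K::nat. exp (real K * (-u) + (-v))) \<longlongrightarrow> 0) sequentially"
      using exp_lim[of "-u" "-v"] 1 by simp
    then have "((\<lambda>K::nat. 1 / (1 + exp (real K * (-u) + (-v)))) \<longlongrightarrow> 1 / (1 + 0)) sequentially"
      by (intro tendsto_intros) auto
    then show ?thesis using 1 by (simp add: sigmoid_def algebra_simps)
  next
    case 2
    have "filterlim (\<lambda>K::nat. exp (real K * (-u) + (-v))) at_top sequentially"
      using filterlim_compose[OF exp_at_top lin_at_top[of "-u" "-v"]] 2 by simp
    then have "filterlim (\<lambda>K::nat. 1 + exp (real K * (-u) + (-v))) at_top sequentially"
      by (rule filterlim_tendsto_add_at_top[OF tendsto_const])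
    then have "((\<lambda>K::nat. inverse (1 + exp (real K * (-u) + (-v)))) \<longlongrightarrow> 0) sequentially"
      by (rule filterlim_inverse_at_top_iff[THEN iffD1] | intro tendsto_inverse_0_at_top)
    then show ?thesis using 2 by (simp add: sigmoid_def algebra_simps divide_inverse)
  next
    case 3
    then show ?thesis by simp
  qed
qed

lemma sigmoid_logit: "0 < p \<Longrightarrow> p < 1 \<Longrightarrow> sigmoid (ln (p / (1 - p))) = p"
  unfolding sigmoid_def by (simp add: exp_minus field_simps)

lemma sigmoid_pos: "0 < sigmoid x" and sigmoid_lt1: "sigmoid x < 1"
  unfolding sigmoid_def by (auto simp: add_pos_pos)

lemma softmax_lim:
  assumes fin: "finite S" and zS: "z \<in> S" and ub: "\<forall>s\<in>S. U s \<le> c" and s0: "s0 \<in> S" "U s0 = c"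
  shows "((\<lambda>K::nat. exp (real K * U z + V z) / (\<Sum>s\<in>S. exp (real K * U s + V s))) \<longlongrightarrow>
     (if U z = c then exp (V z) else 0) / (\<Sum>s\<in>{s\<in>S. U s = c}. exp (V s))) sequentially"
proof -
  have eq: "exp (real K * U z + V z) / (\<Sum>s\<in>S. exp (real K * U s + V s))
      = exp (real K * (U z - c) + V z) / (\<Sum>s\<in>S. exp (real K * (U s - c) + V s))" for K
  proof -
    have "exp (real K * (U s - c) + V s) = exp (real K * U s + V s) * exp (- (real K * c))" for s
      by (simp add: algebra_simps mult_exp_exp)
    then show ?thesis by (simp add: sum_distrib_right[symmetric])
  qed
  have t: "((\<lambda>K::nat. exp (real K * (U s - c) + V s)) \<longlongrightarrow> (if U s = c then exp (V s) else 0)) sequentially"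
    if "s \<in> S" for s
    using exp_lim[of "U s - c" "V s"] ub that by auto
  have "((\<lambda>K::nat. \<Sum>s\<in>S. exp (real K * (U s - c) + V s)) \<longlongrightarrow> (\<Sum>s\<in>S. if U s = c then exp (V s) else 0)) sequentially"
    by (intro tendsto_sum t)
  moreover have "(\<Sum>s\<in>S. if U s = c then exp (V s) else 0) = (\<Sum>s\<in>{s\<in>S. U s = c}. exp (V s))"
    using fin by (simp add: sum.inter_filter)
  moreover have "(\<Sum>s\<in>{s\<in>S. U s = c}. exp (V s)) > 0"
    using fin s0 by (intro sum_pos2[of _ s0]) auto
  ultimately show ?thesis unfolding eq
    by (intro tendsto_divide t[OF zS]) auto
qed


lemma gray_exists: "\<exists>P \<delta>. (\<forall>t<2^k. P t \<in> cube k) \<and> inj_on P {..<2^k} \<and> P 0 = (\<lambda>_. False) \<and>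
   (\<forall>t. Suc t < 2^k \<longrightarrow> \<delta> t < k \<and> P (Suc t) = (P t)(\<delta> t := \<not> P t (\<delta> t)))"
proof (induction k)
  case 0
  show ?case by (rule exI[of _ "\<lambda>_ _. False"]) (auto simp: cube_def inj_on_def)
next
  case (Suc k)
  then obtain P \<delta> where Pc: "\<forall>t<2^k. P t \<in> cube k" and Pi: "inj_on P {..<2^k}" and P0: "P 0 = (\<lambda>_. False)"
    and Ps: "\<forall>t. Suc t < 2^k \<longrightarrow> \<delta> t < k \<and> P (Suc t) = (P t)(\<delta> t := \<not> P t (\<delta> t))" by blast
  define P' where "P' t = (if t < 2^k then P t else (P (2^Suc k - 1 - t))(k := True))" for t
  define \<delta>' where "\<delta>' t = (if Suc t < 2^k then \<delta> t else if Suc t = 2^k then k else \<delta> (2^Suc k - 2 - t))" for t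
  have Pk: "\<not> P t k" if "t < 2^k" for t using Pc that by (auto simp: cube_def)
  have c1: "\<forall>t<2^Suc k. P' t \<in> cube (Suc k)"
    using Pc by (auto simp: P'_def cube_def)
  have c2: "inj_on P' {..<2^Suc k}"
  proof (rule inj_onI)
    fix t t' assume t: "t \<in> {..<2^Suc k}" and t': "t' \<in> {..<2^Suc k}" and e: "P' t = P' t'"
    consider "t < 2^k" "t' < 2^k" | "t < 2^k" "\<not> t' < 2^k" | "\<not> t < 2^k" "t' < 2^k" | "\<not> t < 2^k" "\<not> t' < 2^k" by blast
    then show "t = t'"
    proof cases
      case 1 then show ?thesis using e Pi by (auto simp: P'_def inj_on_def)
    next
      case 2 then show ?thesis using e Pk[of t] by (auto simp: P'_def fun_eq_iff dest: spec[of _ k])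
    next
      case 3 then show ?thesis using e Pk[of t'] by (auto simp: P'_def fun_eq_iff dest: spec[of _ k])
    next
      case 4
      have l: "2^Suc k - 1 - t < 2^k" "2^Suc k - 1 - t' < 2^k" using 4 t t' by auto
      have "P (2^Suc k - 1 - t) = P (2^Suc k - 1 - t')"
      proof
        fix i show "P (2^Suc k - 1 - t) i = P (2^Suc k - 1 - t') i"
          using e 4 Pk[OF l(1)] Pk[OF l(2)] by (cases "i = k") (auto simp: P'_def fun_eq_iff dest: spec[of _ i])
      qed
      then have "2^Suc k - 1 - t = 2^Suc k - 1 - t'" using Pi l by (auto simp: inj_on_def)
      then show ?thesis using t t' by auto
    qed
  qed
  have c3: "P' 0 = (\<lambda>_. False)" using P0 by (simp add: P'_def)
  have c4: "\<delta>' t < Suc k \<and> P' (Suc t) = (P' t)(\<delta>' t := \<not> P' t (\<delta>' t))" if st: "Suc t < 2^Suc k" for t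
  proof -
    consider "Suc t < 2^k" | "Suc t = 2^k" | "Suc t > 2^k" by linarith
    then show ?thesis
    proof cases
      case 1 then show ?thesis using Ps by (auto simp: P'_def \<delta>'_def)
    next
      case 2
      then have "2^Suc k - 1 - Suc t = t" by simp
      then show ?thesis using 2 Pk[of t] by (auto simp: P'_def \<delta>'_def fun_eq_iff)
    next
      case 3
      define s where "s = 2^Suc k - 2 - t"
      have ss: "Suc s < 2^k" "2^Suc k - 1 - Suc t = s" "2^Suc k - 1 - t = Suc s" using 3 st by (auto simp: s_def)
      have ds: "\<delta> s < k" and Pss: "P (Suc s) = (P s)(\<delta> s := \<not> P s (\<delta> s))" using Ps ss(1) by auto
      have "\<delta>' t = \<delta> s" using 3 by (simp add: \<delta>'_def s_def)
      moreover have "P' (Suc t) = (P s)(k := True)" using 3 ss by (simp add: P'_def)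
      moreover have "P' t = ((P s)(\<delta> s := \<not> P s (\<delta> s)))(k := True)" using 3 ss Pss by (simp add: P'_def)
      ultimately show ?thesis using ds by (auto simp: fun_eq_iff)
    qed
  qed
  show ?case using c1 c2 c3 c4 by blast
qed

lemma KL_final:
  assumes pd: "is_distribution n p" and pos: "\<forall>x\<in>cube n. pp x > 0"
    and lim: "\<forall>x\<in>cube n. ((\<lambda>K. q K x) \<longlongrightarrow> pp x) sequentially"
    and small: "(\<Sum>x\<in>{x\<in>cube n. 0<p x}. p x * ln (p x / pp x)) < \<epsilon>"
  shows "\<exists>K. KL_div n p (q K) < ereal \<epsilon>"
proof -
  have fin: "finite {x\<in>cube n. 0<p x}" using finite_cube by auto
  have ev1: "eventually (\<lambda>K. \<forall>x\<in>cube n. q K x > 0) sequentially"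
    using pos lim finite_cube by (intro eventually_ball_finite) (auto intro: order_tendstoD)
  have "((\<lambda>K. \<Sum>x\<in>{x\<in>cube n. 0<p x}. p x * ln (p x / q K x)) \<longlongrightarrow>
      (\<Sum>x\<in>{x\<in>cube n. 0<p x}. p x * ln (p x / pp x))) sequentially"
    using lim pos by (intro tendsto_intros) auto
  then have ev2: "eventually (\<lambda>K. (\<Sum>x\<in>{x\<in>cube n. 0<p x}. p x * ln (p x / q K x)) < \<epsilon>) sequentially"
    using small by (rule order_tendstoD)
  from eventually_conj[OF ev1 ev2] obtain K where
    "\<forall>x\<in>cube n. q K x > 0" "(\<Sum>x\<in>{x\<in>cube n. 0<p x}. p x * ln (p x / q K x)) < \<epsilon>"
    by (auto simp: eventually_sequentially)
  then have "KL_div n p (q K) < ereal \<epsilon>" unfolding KL_div_def by auto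
  then show ?thesis ..
qed

lemma pp_exists:
  assumes pd: "is_distribution n p" and e: "\<epsilon> > 0"
  shows "\<exists>pp. (\<forall>x\<in>cube n. pp x > 0) \<and> (\<Sum>x\<in>cube n. pp x) = 1 \<and>
     (\<Sum>x\<in>{x\<in>cube n. 0<p x}. p x * ln (p x / pp x)) < \<epsilon>"
proof -
  define \<eta> where "\<eta> = 1 - exp (-(\<epsilon>/2))"
  have \<eta>: "0 < \<eta>" "\<eta> < 1" using e by (auto simp: \<eta>_def)
  define pp where "pp x = (1 - \<eta>) * p x + \<eta> / 2^n" for x
  have p0: "\<forall>x\<in>cube n. 0 \<le> p x" and p1: "(\<Sum>x\<in>cube n. p x) = 1" using pd by (auto simp: is_distribution_def)
  have a: "\<forall>x\<in>cube n. pp x > 0" using p0 \<eta> by (auto simp: pp_def intro!: add_nonneg_pos)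
  have b: "(\<Sum>x\<in>cube n. pp x) = 1"
    using p1 \<eta> card_cube[of n] by (simp add: pp_def sum.distrib sum_distrib_left[symmetric])
  have t: "p x * ln (p x / pp x) \<le> p x * (\<epsilon>/2)" if "x \<in> cube n" "0 < p x" for x
  proof -
    have "pp x \<ge> (1 - \<eta>) * p x" using \<eta> by (simp add: pp_def)
    then have "p x / pp x \<le> p x / ((1 - \<eta>) * p x)"
      using that \<eta> a by (intro divide_left_mono) (auto intro!: mult_pos_pos)
    also have "\<dots> = exp (\<epsilon>/2)" using that \<eta> by (simp add: \<eta>_def exp_minus field_simps)
    finally have "ln (p x / pp x) \<le> ln (exp (\<epsilon>/2))" using that a by (subst ln_le_cancel_iff) auto
    then have "ln (p x / pp x) \<le> \<epsilon>/2" by simp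
    then show ?thesis using that by (intro mult_left_mono) auto
  qed
  have "(\<Sum>x\<in>{x\<in>cube n. 0<p x}. p x * ln (p x / pp x)) \<le> (\<Sum>x\<in>{x\<in>cube n. 0<p x}. p x * (\<epsilon>/2))"
    using t by (intro sum_mono) auto
  also have "\<dots> = (\<Sum>x\<in>{x\<in>cube n. 0<p x}. p x) * (\<epsilon>/2)"
    by (simp add: sum_distrib_right)
  also have "(\<Sum>x\<in>{x\<in>cube n. 0<p x}. p x) = (\<Sum>x\<in>cube n. p x)"
    using p0 finite_cube[of n] by (intro sum.mono_neutral_left) force+
  also have "(\<Sum>x\<in>cube n. p x) * (\<epsilon>/2) = \<epsilon>/2" using p1 by simp
  also have "\<dots> < \<epsilon>" using e by simp
  finally show ?thesis using a b by blast
qed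


lemma mod_shift:
  fixes i e g d :: nat
  assumes i: "i < d" and e: "e < d" and g: "g < d"
  shows "((i + d - g) mod d = e) \<longleftrightarrow> (i = (e + g) mod d)"
proof -
  have m1: "(e + g) mod d = (if e + g < d then e + g else e + g - d)"
  proof (cases "e + g < d")
    case False
    then have "(e + g) mod d = (e + g - d) mod d" by (simp add: le_mod_geq)
    also have "\<dots> = e + g - d" using e g by (intro mod_less) linarith
    finally show ?thesis using False by simp
  qed simp
  have m2: "(i + d - g) mod d = (if g \<le> i then i - g else i + d - g)"
  proof (cases "g \<le> i")
    case True
    then have "(i + d - g) mod d = (i - g + d) mod d" by (simp add: algebra_simps)
    also have "\<dots> = i - g" using i by simp
    finally show ?thesis using True by simp
  next
    case False
    then have "i + d - g < d" using i by linarith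
    then show ?thesis using False by simp
  qed
  show ?thesis unfolding m1 m2 using i e g by auto
qed

locale sch =
  fixes d b n :: nat and P :: "nat \<Rightarrow> nat \<Rightarrow> bool" and \<delta> :: "nat \<Rightarrow> nat"
    and sel :: "nat \<Rightarrow> nat \<Rightarrow> bool" and pp :: "(nat \<Rightarrow> bool) \<Rightarrow> real"
  assumes n_eq: "n = d + b" and b1: "b \<ge> 1" and d_eq: "d = 2^(b-1)"
    and Pc: "\<forall>t<2^d. P t \<in> cube d" and Pi: "inj_on P {..<2^d}" and P0: "P 0 = (\<lambda>_. False)"
    and Ps: "\<forall>t. Suc t < 2^d \<longrightarrow> \<delta> t < d \<and> P (Suc t) = (P t)(\<delta> t := \<not> P t (\<delta> t))"
    and selb: "bij_betw sel {..<d} (cube (b-1))"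
    and ppos: "\<forall>x\<in>cube n. pp x > 0" and psum: "(\<Sum>x\<in>cube n. pp x) = 1"
begin

definition Y :: "nat \<Rightarrow> nat \<Rightarrow> nat \<Rightarrow> bool" where "Y g t i = (i < d \<and> P t ((i + d - g) mod d))"
definition dir :: "nat \<Rightarrow> nat \<Rightarrow> nat" where "dir g t = (\<delta> t + g) mod d"
definition gof :: "nat \<Rightarrow> nat \<Rightarrow> nat" where "gof u j = (j + d - \<delta> u) mod d"
definition pt :: "nat \<Rightarrow> bool \<Rightarrow> nat \<Rightarrow> nat \<Rightarrow> bool" where
  "pt g cb t k = (if k < d then Y g t k else if k = d then cb else sel g (k - Suc d))"
definition Idx :: "(nat \<times> bool \<times> nat) set" where "Idx = {..<d} \<times> UNIV \<times> {..<2^d}"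
definition pti :: "nat \<times> bool \<times> nat \<Rightarrow> nat \<Rightarrow> bool" where "pti = (\<lambda>(g,cb,t). pt g cb t)"
definition T :: nat where "T = 2^d - 1"

lemma d_pos: "d \<ge> 1" using d_eq by simp
lemma d_lt_n: "d < n" using n_eq b1 by simp
lemma T_Suc: "Suc T = 2^d" by (simp add: T_def)

lemma Y_cube: "Y g t \<in> cube d" by (simp add: Y_def cube_def)

lemma dir_lt: "dir g t < d" using d_pos by (simp add: dir_def)

lemma gof_dir: "g < d \<Longrightarrow> j < d \<Longrightarrow> \<delta> u < d \<Longrightarrow> (gof u j = g) \<longleftrightarrow> (j = dir g u)"
  unfolding gof_def dir_def using mod_shift[of j d g "\<delta> u"] by (simp add: add.commute)

lemma gof_lt: "gof u j < d" using d_pos by (simp add: gof_def)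

lemma dir_inj: "g < d \<Longrightarrow> g' < d \<Longrightarrow> Suc t < 2^d \<Longrightarrow> dir g t = dir g' t \<Longrightarrow> g = g'"
  using gof_dir[of g "dir g t" t] gof_dir[of g' "dir g t" t] dir_lt Ps by metis

lemma Y_step:
  assumes g: "g < d" and t: "Suc t < 2^d"
  shows "Y g (Suc t) = (Y g t)(dir g t := \<not> Y g t (dir g t))"
proof
  fix i
  have dt: "\<delta> t < d" and ps: "P (Suc t) = (P t)(\<delta> t := \<not> P t (\<delta> t))" using Ps t by auto
  show "Y g (Suc t) i = ((Y g t)(dir g t := \<not> Y g t (dir g t))) i"
  proof (cases "i < d")
    case True
    have iff: "((i + d - g) mod d = \<delta> t) \<longleftrightarrow> (i = dir g t)"
      using mod_shift[OF True dt g] by (simp add: dir_def)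
    have "(dir g t + d - g) mod d = \<delta> t" using mod_shift[OF dir_lt dt g] by (simp add: dir_def)
    then show ?thesis using True iff ps dir_lt by (auto simp: Y_def)
  next
    case False
    then show ?thesis using dir_lt by (auto simp: Y_def)
  qed
qed

lemma pt_cube: "g < d \<Longrightarrow> pt g cb t \<in> cube n"
proof -
  assume g: "g < d"
  have "sel g \<in> cube (b-1)" using selb g by (auto simp: bij_betw_def)
  then show ?thesis unfolding cube_def pt_def Y_def using n_eq d_lt_n
    by (auto dest!: spec[of _ "_ - Suc d"])
qed

lemma pt_d: "pt g cb t d = cb" by (simp add: pt_def)

lemma pt_upd: "pt g cb t = (pt g False t)(d := cb)" by (auto simp: pt_def fun_eq_iff)

lemma pt_step:
  assumes g: "g < d" and t: "Suc t < 2^d"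
  shows "pt g cb (Suc t) = (pt g cb t)(dir g t := \<not> pt g cb t (dir g t))"
  using Y_step[OF g t] dir_lt by (auto simp: pt_def fun_eq_iff)

lemma pt_inj:
  assumes g: "g < d" "g' < d" and t: "t < 2^d" "t' < 2^d" and e: "pt g cb t = pt g' cb' t'"
  shows "g = g' \<and> cb = cb' \<and> t = t'"
proof -
  have cb: "cb = cb'" using e pt_d by metis
  have "sel g i = sel g' i" for i
    using fun_cong[OF e, of "i + Suc d"] by (simp add: pt_def)
  then have "sel g = sel g'" by auto
  then have gg: "g = g'" using selb g by (auto simp: bij_betw_def inj_on_def)
  have "P t k = P t' k" if k: "k < d" for k
  proof -
    define i where "i = (k + g) mod d"
    have i: "i < d" using d_pos by (simp add: i_def)
    have "(i + d - g) mod d = k" using mod_shift[OF i k g(1)] by (simp add: i_def)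
    then show ?thesis using fun_cong[OF e, of i] i gg by (simp add: pt_def Y_def)
  qed
  moreover have "P t k = P t' k" if k: "\<not> k < d" for k
    using Pc t k by (auto simp: cube_def)
  ultimately have "P t = P t'" by auto
  then have "t = t'" using Pi t by (auto simp: inj_on_def)
  then show ?thesis using cb gg by simp
qed

lemma finite_Idx: "finite Idx" by (simp add: Idx_def)

lemma pti_inj: "inj_on pti Idx"
  using pt_inj by (auto simp: inj_on_def pti_def Idx_def)

lemma card_Idx: "card Idx = 2^n"
proof -
  have "card Idx = d * (2 * 2^d)" by (simp add: Idx_def card_cartesian_product)
  also have "\<dots> = 2^n"
  proof -
    have "2^b = 2 * d" using d_eq b1 by (cases b) auto
    then show ?thesis by (simp add: n_eq power_add)
  qed
  finally show ?thesis .
qed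

lemma pti_surj: "pti ` Idx = cube n"
proof -
  have sub: "pti ` Idx \<subseteq> cube n" using pt_cube by (auto simp: pti_def Idx_def)
  have "card (pti ` Idx) = card (cube n)" using card_image[OF pti_inj] card_Idx card_cube by simp
  then show ?thesis using sub finite_cube by (intro card_subset_eq) auto
qed

lemma pti_in: "i \<in> Idx \<Longrightarrow> pti i \<in> cube n" using pti_surj by auto

lemma sum_uniq:
  assumes "finite A" "a \<in> A" "\<And>x. x \<in> A \<Longrightarrow> P' x \<longleftrightarrow> x = a"
  shows "(\<Sum>x\<in>A. if P' x then f x else 0) = f a"
proof -
  have "(\<Sum>x\<in>A. if P' x then f x else 0) = (\<Sum>x\<in>A. if x = a then f x else 0)"
    using assms(3) by (intro sum.cong) auto
  also have "\<dots> = f a" using assms by (simp add: sum.delta')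
  finally show ?thesis .
qed

lemma sum_pti:
  assumes x: "x \<in> cube n"
  shows "(\<Sum>i\<in>Idx. if pti i = x then f i else 0) = f (the_inv_into Idx pti x)"
proof -
  have xi: "the_inv_into Idx pti x \<in> Idx" "pti (the_inv_into Idx pti x) = x"
    using x pti_surj pti_inj by (auto intro: the_inv_into_into f_the_inv_into_f)
  show ?thesis
    using pti_inj xi by (intro sum_uniq finite_Idx) (auto simp: inj_on_def)
qed

lemma sum_cube_pti: "(\<Sum>x\<in>cube n. f x) = (\<Sum>i\<in>Idx. f (pti i))"
  using sum.reindex[OF pti_inj, of f] pti_surj by simp

end


context sch begin

lemma sum_Idx: "(\<Sum>i\<in>Idx. f i) = (\<Sum>g<d. \<Sum>cb\<in>UNIV. \<Sum>t<2^d. f (g,cb,t))"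
  unfolding Idx_def by (simp add: sum.cartesian_product)

definition tl :: "nat \<Rightarrow> bool \<Rightarrow> nat \<Rightarrow> real" where "tl g cb u = (\<Sum>t\<in>{u..<2^d}. pp (pt g cb t))"
definition w :: "nat \<Rightarrow> nat \<times> bool \<times> nat \<Rightarrow> real" where
  "w u = (\<lambda>(g,cb,t). if t < u then pp (pt g cb t) else if t = u then tl g cb u else 0)"
definition mu :: "nat \<Rightarrow> (nat \<Rightarrow> bool) \<Rightarrow> real" where
  "mu u x = (\<Sum>i\<in>Idx. if pti i = x then w u i else 0)"

lemma pp_pt_pos: "g < d \<Longrightarrow> pp (pt g cb t) > 0" using ppos pt_cube by auto

lemma tl_pos: "g < d \<Longrightarrow> u < 2^d \<Longrightarrow> tl g cb u > 0"
  unfolding tl_def using pp_pt_pos by (intro sum_pos) auto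

lemma tl_split: "Suc u < 2^d \<Longrightarrow> tl g cb u = pp (pt g cb u) + tl g cb (Suc u)"
  unfolding tl_def by (subst sum.atLeast_Suc_lessThan) auto

definition stay where "stay g cb u = pp (pt g cb u) / tl g cb u"
definition mv where "mv g cb u = tl g cb (Suc u) / tl g cb u"

lemma stay_mv:
  assumes g: "g < d" and u: "Suc u < 2^d"
  shows "0 < stay g cb u" "stay g cb u < 1" "0 < mv g cb u" "mv g cb u < 1" "stay g cb u + mv g cb u = 1"
    "stay g cb u * tl g cb u = pp (pt g cb u)" "mv g cb u * tl g cb u = tl g cb (Suc u)"
proof -
  have a: "pp (pt g cb u) > 0" using pp_pt_pos g by auto
  have b: "tl g cb (Suc u) > 0" using tl_pos g u by auto
  have c: "tl g cb u = pp (pt g cb u) + tl g cb (Suc u)" using tl_split u by auto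
  have dd: "pp (pt g cb u) + tl g cb (Suc u) > 0" using a b by linarith
  have st: "stay g cb u = pp (pt g cb u) / (pp (pt g cb u) + tl g cb (Suc u))" unfolding stay_def c ..
  have mvv: "mv g cb u = tl g cb (Suc u) / (pp (pt g cb u) + tl g cb (Suc u))" unfolding mv_def c ..
  show "0 < stay g cb u" "0 < mv g cb u" unfolding st mvv using a b dd by auto
  show "stay g cb u < 1" "mv g cb u < 1" unfolding st mvv using a b dd by auto
  show "stay g cb u + mv g cb u = 1" unfolding st mvv using dd by (simp add: add_divide_distrib[symmetric])
  show "stay g cb u * tl g cb u = pp (pt g cb u)" "mv g cb u * tl g cb u = tl g cb (Suc u)"
    unfolding st mvv c using dd by auto
qed

definition prob1 :: "nat \<Rightarrow> nat \<Rightarrow> bool \<Rightarrow> real" where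
  "prob1 u j cb = (if pt (gof u j) False u j then stay (gof u j) cb u else mv (gof u j) cb u)"
definition logit :: "real \<Rightarrow> real" where "logit p = ln (p / (1 - p))"
definition al where "al u j = logit (prob1 u j False)"
definition be where "be u j = logit (prob1 u j True) - al u j"
definition hd :: "nat \<Rightarrow> nat \<Rightarrow> (nat \<Rightarrow> bool) \<Rightarrow> real" where
  "hd u j x = (\<Sum>k<n. if k = j \<or> k = d then 0 else (if pt (gof u j) False u k then 1 - of_bool (x k) else of_bool (x k)))"
definition UU :: "nat \<Rightarrow> nat \<Rightarrow> (nat \<Rightarrow> bool) \<Rightarrow> real" where
  "UU u j x = (if j < d then (if pt (gof u j) False u j then hd u j x - real n + real n * of_bool (x j)
      else real n * of_bool (x j) - hd u j x) else 2 * of_bool (x j) - 1)"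
definition VV :: "nat \<Rightarrow> nat \<Rightarrow> (nat \<Rightarrow> bool) \<Rightarrow> real" where
  "VV u j x = (if j < d then al u j + be u j * of_bool (x d) else 0)"
definition cU :: "nat \<Rightarrow> nat \<Rightarrow> nat \<Rightarrow> real" where
  "cU u j k = (if j < d then (if k = j then real n else if k = d then 0
      else if pt (gof u j) False u k = pt (gof u j) False u j then -1 else 1) else if k = j then 2 else 0)"
definition c0U :: "nat \<Rightarrow> nat \<Rightarrow> real" where
  "c0U u j = (if j < d then (if pt (gof u j) False u j
      then (\<Sum>k<n. if k = j \<or> k = d then 0 else if pt (gof u j) False u k then 1 else 0) - real n
      else - (\<Sum>k<n. if k = j \<or> k = d then 0 else if pt (gof u j) False u k then 1 else 0)) else -1)"
definition cV :: "nat \<Rightarrow> nat \<Rightarrow> nat \<Rightarrow> real" where "cV u j k = (if j < d \<and> k = d then be u j else 0)"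
definition c0V :: "nat \<Rightarrow> nat \<Rightarrow> real" where "c0V u j = (if j < d then al u j else 0)"

lemma hd_lin: "hd u j x = (\<Sum>k<n. if k = j \<or> k = d then 0 else if pt (gof u j) False u k then 1 else 0)
   + (\<Sum>k<n. (if k = j \<or> k = d then 0 else if pt (gof u j) False u k then -1 else 1) * of_bool (x k))"
  unfolding hd_def sum.distrib[symmetric] by (intro sum.cong) auto

lemma xj_lin: "j < n \<Longrightarrow> (c::real) * of_bool (x j) = (\<Sum>k<n. (if k = j then c else 0) * of_bool (x k))"
proof -
  assume j: "j < n"
  have "(\<Sum>k<n. (if k = j then c else 0) * of_bool (x k)) = (\<Sum>k<n. if k = j then c * of_bool (x j) else 0)"
    by (intro sum.cong) auto
  also have "\<dots> = c * of_bool (x j)" using j by simp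
  finally show ?thesis by simp
qed

lemma UU_lin: "j < n \<Longrightarrow> UU u j x = (\<Sum>k<n. cU u j k * of_bool (x k)) + c0U u j"
proof -
  assume j: "j < n"
  show ?thesis
  proof (cases "j < d")
    case True
    let ?a = "pt (gof u j) False u"
    have nx: "real n * of_bool (x j) = (\<Sum>k<n. (if k = j then real n else 0) * of_bool (x k))"
      using xj_lin[OF j] by simp
    show ?thesis
    proof (cases "?a j")
      case A: True
      have "UU u j x = (\<Sum>k<n. (if k = j \<or> k = d then 0 else (if ?a k then 1 - of_bool (x k) else of_bool (x k)))
          + (if k = j then real n else 0) * of_bool (x k)) - real n"
        using True A by (simp add: UU_def hd_def nx sum.distrib)
      also have "\<dots> = (\<Sum>k<n. cU u j k * of_bool (x k) + (if k = j \<or> k = d then 0 else if ?a k then 1 else 0)) - real n"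
        using True A by (intro arg_cong2[where f="(-)"] sum.cong refl) (auto simp: cU_def)
      also have "\<dots> = (\<Sum>k<n. cU u j k * of_bool (x k)) + c0U u j"
        using True A by (simp add: c0U_def sum.distrib)
      finally show ?thesis .
    next
      case A: False
      have "UU u j x = (\<Sum>k<n. (if k = j then real n else 0) * of_bool (x k) -
          (if k = j \<or> k = d then 0 else (if ?a k then 1 - of_bool (x k) else of_bool (x k))))"
        using True A by (simp add: UU_def hd_def nx sum_subtractf)
      also have "\<dots> = (\<Sum>k<n. cU u j k * of_bool (x k) - (if k = j \<or> k = d then 0 else if ?a k then 1 else 0))"
        using True A by (intro sum.cong refl) (auto simp: cU_def)
      also have "\<dots> = (\<Sum>k<n. cU u j k * of_bool (x k)) + c0U u j"
        using True A by (simp add: c0U_def sum_subtractf)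
      finally show ?thesis .
    qed
  next
    case False
    then show ?thesis using j
      by (simp add: UU_def cU_def c0U_def xj_lin[symmetric])
  qed
qed

lemma VV_lin: "VV u j x = (\<Sum>k<n. cV u j k * of_bool (x k)) + c0V u j"
  using d_lt_n by (auto simp: VV_def cV_def c0V_def xj_lin[symmetric] mult.commute)


definition moder :: "nat \<Rightarrow> nat \<Rightarrow> (nat \<Rightarrow> bool) \<Rightarrow> bool" where
  "moder u j x \<longleftrightarrow> j < d \<and> (\<exists>cb. x = pt (gof u j) cb u)"
definition pj :: "nat \<Rightarrow> nat \<Rightarrow> (nat \<Rightarrow> bool) \<Rightarrow> real" where
  "pj u j x = (if UU u j x > 0 then 1 else if UU u j x < 0 then 0 else sigmoid (VV u j x))"

lemma hd_nonneg: "0 \<le> hd u j x" unfolding hd_def by (intro sum_nonneg) auto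

lemma hd_lt: "j < n \<Longrightarrow> hd u j x < real n"
proof -
  assume j: "j < n"
  have "hd u j x \<le> (\<Sum>k<n. 1 - (if k = j then 1 else 0))" unfolding hd_def by (intro sum_mono) auto
  also have "\<dots> = real n - 1" using j by (simp add: sum_subtractf)
  finally show ?thesis by simp
qed

lemma hd_zero: "hd u j x = 0 \<longleftrightarrow> (\<forall>k<n. k \<noteq> j \<longrightarrow> k \<noteq> d \<longrightarrow> x k = pt (gof u j) False u k)"
  unfolding hd_def by (subst sum_nonneg_eq_0_iff) auto

lemma moder_iff:
  assumes x: "x \<in> cube n" and j: "j < d"
  shows "moder u j x \<longleftrightarrow> (x j = pt (gof u j) False u j \<and> hd u j x = 0)"
proof
  assume "moder u j x"
  then obtain cb where "x = pt (gof u j) cb u" by (auto simp: moder_def)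
  then have "\<forall>k. k \<noteq> d \<longrightarrow> x k = pt (gof u j) False u k" by (subst (asm) pt_upd) auto
  then show "x j = pt (gof u j) False u j \<and> hd u j x = 0" using j by (auto simp: hd_zero)
next
  assume a: "x j = pt (gof u j) False u j \<and> hd u j x = 0"
  have "x = pt (gof u j) (x d) u"
  proof
    fix k
    show "x k = pt (gof u j) (x d) u k"
    proof (cases "k < n")
      case True
      then show ?thesis using a by (subst pt_upd) (auto simp: hd_zero)
    next
      case False
      then show ?thesis using x pt_cube[OF gof_lt[of u j]] by (auto simp: cube_def)
    qed
  qed
  then show "moder u j x" using j by (auto simp: moder_def)
qed

lemma prob1_bounds: "Suc u < 2^d \<Longrightarrow> 0 < prob1 u j cb \<and> prob1 u j cb < 1"
  using stay_mv[OF gof_lt] by (auto simp: prob1_def)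

lemma pj_mod:
  assumes u: "Suc u < 2^d" and x: "x \<in> cube n" and m: "moder u j x"
  shows "pj u j x = prob1 u j (x d)"
proof -
  have j: "j < d" using m by (auto simp: moder_def)
  from moder_iff[OF x j] m have a: "x j = pt (gof u j) False u j" "hd u j x = 0" by auto
  have "UU u j x = 0" using a j by (auto simp: UU_def)
  moreover have "sigmoid (VV u j x) = prob1 u j (x d)"
    using j prob1_bounds[OF u] by (auto simp: VV_def be_def al_def logit_def sigmoid_logit)
  ultimately show ?thesis by (simp add: pj_def)
qed

lemma pj_nmod:
  assumes x: "x \<in> cube n" and j: "j < n" and m: "\<not> moder u j x"
  shows "pj u j x = of_bool (x j)"
proof (cases "j < d")
  case True
  have h0: "0 \<le> hd u j x" and hn: "hd u j x < real n" using hd_nonneg hd_lt[OF j] by auto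
  from moder_iff[OF x True] m have a: "\<not> (x j = pt (gof u j) False u j \<and> hd u j x = 0)" by auto
  show ?thesis
    using True a h0 hn by (cases "pt (gof u j) False u j"; cases "x j") (auto simp: pj_def UU_def)
next
  case False
  then show ?thesis by (cases "x j") (auto simp: pj_def UU_def)
qed

lemma moder_pt:
  assumes u: "Suc u < 2^d" and g: "g < d" and t: "t < 2^d" and j: "j < n"
  shows "moder u j (pt g cb t) \<longleftrightarrow> (t = u \<and> j = dir g u)"
proof
  assume "moder u j (pt g cb t)"
  then obtain cb' where j': "j < d" and e: "pt g cb t = pt (gof u j) cb' u" by (auto simp: moder_def)
  from pt_inj[OF g gof_lt t _ e] u have "g = gof u j" "t = u" by auto
  then show "t = u \<and> j = dir g u" using gof_dir[OF g j'] Ps u by auto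
next
  assume a: "t = u \<and> j = dir g u"
  then have "j < d" using dir_lt by auto
  moreover then have "gof u j = g" using gof_dir[OF g] a Ps u by auto
  ultimately show "moder u j (pt g cb t)" using a by (auto simp: moder_def)
qed

definition kk :: "nat \<Rightarrow> (nat \<Rightarrow> bool) \<Rightarrow> (nat \<Rightarrow> bool) \<Rightarrow> real" where
  "kk u z y = (\<Prod>j<n. if z j then pj u j y else 1 - pj u j y)"

lemma prod_ind: "finite A \<Longrightarrow> (\<Prod>j\<in>A. of_bool (Q j) :: real) = of_bool (\<forall>j\<in>A. Q j)"
  by (induction A rule: finite_induct) auto

lemma cube_eq:
  assumes "z \<in> cube n" "x \<in> cube n"
  shows "(z = x) \<longleftrightarrow> (\<forall>j<n. z j = x j)"
proof
  assume a: "\<forall>j<n. z j = x j"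
  show "z = x"
  proof
    fix j show "z j = x j" using a assms by (cases "j < n") (auto simp: cube_def)
  qed
qed auto

lemma prod_copy:
  fixes q :: "nat \<Rightarrow> real"
  assumes z: "z \<in> cube n" and x: "x \<in> cube n" and q: "\<forall>j<n. q j = of_bool (x j)"
  shows "(\<Prod>j<n. if z j then q j else 1 - q j) = of_bool (z = x)"
proof -
  have "(\<Prod>j<n. if z j then q j else 1 - q j) = (\<Prod>j<n. of_bool (z j = x j))"
    using q by (intro prod.cong) auto
  also have "\<dots> = of_bool (\<forall>j<n. z j = x j)" by (auto simp: prod_ind)
  also have "\<dots> = of_bool (z = x)" using cube_eq[OF z x] by simp
  finally show ?thesis .
qed

lemma prod_flip:
  fixes q :: "nat \<Rightarrow> real"
  assumes z: "z \<in> cube n" and x: "x \<in> cube n" and j0: "j0 < n"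
    and q: "\<forall>j<n. j \<noteq> j0 \<longrightarrow> q j = of_bool (x j)"
  shows "(\<Prod>j<n. if z j then q j else 1 - q j) =
    of_bool (z = x) * (if x j0 then q j0 else 1 - q j0) + of_bool (z = x(j0 := \<not> x j0)) * (if x j0 then 1 - q j0 else q j0)"
proof -
  have "(\<Prod>j<n. if z j then q j else 1 - q j) = (if z j0 then q j0 else 1 - q j0) * (\<Prod>j\<in>{..<n}-{j0}. if z j then q j else 1 - q j)"
    using j0 by (subst prod.remove[of _ j0]) auto
  also have "(\<Prod>j\<in>{..<n}-{j0}. if z j then q j else 1 - q j) = (\<Prod>j\<in>{..<n}-{j0}. of_bool (z j = x j))"
    using q by (intro prod.cong) auto
  also have "\<dots> = of_bool (\<forall>j\<in>{..<n}-{j0}. z j = x j)" by (simp add: prod_ind)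
  finally have e: "(\<Prod>j<n. if z j then q j else 1 - q j) = (if z j0 then q j0 else 1 - q j0) * of_bool (\<forall>j\<in>{..<n}-{j0}. z j = x j)" .
  have xf: "x(j0 := \<not> x j0) \<in> cube n" using x j0 by (auto simp: cube_def)
  show ?thesis
  proof (cases "\<forall>j\<in>{..<n}-{j0}. z j = x j")
    case True
    show ?thesis
    proof (cases "z j0 = x j0")
      case True2: True
      then have "z = x" using True cube_eq[OF z x] by auto
      then show ?thesis using e by (auto simp: fun_eq_iff)
    next
      case False2: False
      then have "z = x(j0 := \<not> x j0)" using True cube_eq[OF z xf] by auto
      then show ?thesis using e False2 by (auto simp: fun_eq_iff)
    qed
  next
    case False
    then obtain k where k: "k < n" "k \<noteq> j0" "z k \<noteq> x k" by auto
    then have "z \<noteq> x" "z \<noteq> x(j0 := \<not> x j0)" by auto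
    then show ?thesis using e False by simp
  qed
qed

lemma kk_nonhead:
  assumes u: "Suc u < 2^d" and g: "g < d" and t: "t < 2^d" "t \<noteq> u" and z: "z \<in> cube n"
  shows "kk u z (pt g cb t) = of_bool (z = pt g cb t)"
  unfolding kk_def using pt_cube[OF g] z moder_pt[OF u g t(1)] t(2)
  by (intro prod_copy) (auto simp: pj_nmod)

lemma kk_head:
  assumes u: "Suc u < 2^d" and g: "g < d" and z: "z \<in> cube n"
  shows "kk u z (pt g cb u) = of_bool (z = pt g cb u) * stay g cb u + of_bool (z = pt g cb (Suc u)) * mv g cb u"
proof -
  let ?x = "pt g cb u" and ?j = "dir g u"
  have j: "?j < n" using dir_lt d_lt_n less_trans by blast
  have ud: "u < 2^d" using u by simp
  have q: "\<forall>j<n. j \<noteq> ?j \<longrightarrow> pj u j ?x = of_bool (?x j)"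
  proof (intro allI impI)
    fix j assume jj: "j < n" "j \<noteq> ?j"
    then have "\<not> moder u j ?x" using moder_pt[OF u g ud] by simp
    then show "pj u j ?x = of_bool (?x j)" using pj_nmod[OF pt_cube[OF g] jj(1)] by simp
  qed
  have mj: "moder u ?j ?x" using moder_pt[OF u g ud j] by simp
  have p: "pj u ?j ?x = prob1 u ?j cb" using pj_mod[OF u pt_cube[OF g] mj] by (simp add: pt_d)
  have gg: "gof u ?j = g" using gof_dir[OF g dir_lt] Ps u by auto
  have xj: "?x ?j = pt g False u ?j" using dir_lt[of g u] by (subst pt_upd) simp
  have sm: "stay g cb u + mv g cb u = 1" using stay_mv[OF g u] by simp
  have "kk u z ?x = of_bool (z = ?x) * (if ?x ?j then pj u ?j ?x else 1 - pj u ?j ?x)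
     + of_bool (z = ?x(?j := \<not> ?x ?j)) * (if ?x ?j then 1 - pj u ?j ?x else pj u ?j ?x)"
    unfolding kk_def using z pt_cube[OF g] j q by (rule prod_flip)
  also have "?x(?j := \<not> ?x ?j) = pt g cb (Suc u)" using pt_step[OF g u] by simp
  also have "(if ?x ?j then pj u ?j ?x else 1 - pj u ?j ?x) = stay g cb u"
    using p gg xj sm by (auto simp: prob1_def)
  also have "(if ?x ?j then 1 - pj u ?j ?x else pj u ?j ?x) = mv g cb u"
    using p gg xj sm by (auto simp: prob1_def)
  finally show ?thesis .
qed

end


context sch begin

lemma fiber_id:
  assumes u: "Suc u < 2^d" and g: "g < d" and z: "z \<in> cube n"
  shows "(\<Sum>t<2^d. kk u z (pt g cb t) * w u (g,cb,t)) = (\<Sum>t<2^d. if pt g cb t = z then w (Suc u) (g,cb,t) else 0)"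
proof -
  define W where "W t = (if t = u then pp (pt g cb u) else w u (g,cb,t))" for t
  define X where "X = of_bool (z = pt g cb (Suc u)) * tl g cb (Suc u)"
  have l: "kk u z (pt g cb t) * w u (g,cb,t) = (if pt g cb t = z then W t else 0) + (if t = u then X else 0)"
    if t: "t < 2^d" for t
  proof (cases "t = u")
    case True
    then show ?thesis using kk_head[OF u g z, of cb] stay_mv[OF g u, of cb]
      by (auto simp: W_def X_def w_def algebra_simps)
  next
    case False
    then show ?thesis using kk_nonhead[OF u g t False z] by (auto simp: W_def X_def)
  qed
  have r: "(if pt g cb t = z then w (Suc u) (g,cb,t) else 0) = (if pt g cb t = z then W t else 0) + (if t = Suc u then X else 0)"
    if t: "t < 2^d" for t
    by (auto simp: W_def X_def w_def)
  have "(\<Sum>t<2^d. kk u z (pt g cb t) * w u (g,cb,t)) = (\<Sum>t<2^d. if pt g cb t = z then W t else 0) + X"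
    using u by (simp add: l sum.distrib)
  also have "\<dots> = (\<Sum>t<2^d. if pt g cb t = z then w (Suc u) (g,cb,t) else 0)"
    using u by (simp add: r sum.distrib)
  finally show ?thesis .
qed

lemma kstep:
  assumes u: "Suc u < 2^d" and z: "z \<in> cube n"
  shows "(\<Sum>y\<in>cube n. kk u z y * mu u y) = mu (Suc u) z"
proof -
  have "(\<Sum>y\<in>cube n. kk u z y * mu u y) = (\<Sum>y\<in>cube n. \<Sum>i\<in>Idx. if pti i = y then kk u z y * w u i else 0)"
    unfolding mu_def sum_distrib_left by (intro sum.cong) auto
  also have "\<dots> = (\<Sum>i\<in>Idx. \<Sum>y\<in>cube n. if pti i = y then kk u z y * w u i else 0)" by (rule sum.swap)
  also have "\<dots> = (\<Sum>i\<in>Idx. kk u z (pti i) * w u i)" using pti_in finite_cube by (simp add: sum.delta)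
  also have "\<dots> = (\<Sum>g<d. \<Sum>cb\<in>UNIV. \<Sum>t<2^d. kk u z (pt g cb t) * w u (g,cb,t))" by (simp add: sum_Idx pti_def)
  also have "\<dots> = (\<Sum>g<d. \<Sum>cb\<in>UNIV. \<Sum>t<2^d. if pt g cb t = z then w (Suc u) (g,cb,t) else 0)"
    using fiber_id[OF u _ z] by simp
  also have "\<dots> = mu (Suc u) z" by (simp add: mu_def sum_Idx pti_def)
  finally show ?thesis .
qed

definition kst :: "nat \<Rightarrow> (nat \<Rightarrow> bool) \<Rightarrow> (nat \<Rightarrow> bool) \<Rightarrow> real" where "kst i = kk (T - 1 - i)"

lemma down_cong: "(\<forall>y\<in>C. f y = f' y) \<Longrightarrow> x \<in> C \<Longrightarrow> down k C N f x = down k C N f' x"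
proof (induction N arbitrary: f f' x)
  case 0 then show ?case by simp
next
  case (Suc N)
  have "(\<lambda>x. \<Sum>y\<in>C. k N x y * f y) = (\<lambda>x. \<Sum>y\<in>C. k N x y * f' y)"
    using Suc.prems by (auto intro!: sum.cong)
  then show ?case by simp
qed

lemma iter: "j \<le> T \<Longrightarrow> x \<in> cube n \<Longrightarrow> down kst (cube n) j (mu (T - j)) x = mu T x"
proof (induction j arbitrary: x)
  case 0 then show ?case by simp
next
  case (Suc j)
  have u: "Suc (T - Suc j) < 2^d" using Suc.prems T_Suc by simp
  have e: "T - 1 - j = T - Suc j" "Suc (T - Suc j) = T - j" using Suc.prems by auto
  have "\<forall>y\<in>cube n. (\<Sum>y'\<in>cube n. kst j y y' * mu (T - Suc j) y') = mu (T - j) y"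
    using kstep[OF u] by (simp add: kst_def e)
  then have "down kst (cube n) j (\<lambda>y. \<Sum>y'\<in>cube n. kst j y y' * mu (T - Suc j) y') x = down kst (cube n) j (mu (T - j)) x"
    using Suc.prems by (intro down_cong) auto
  then show ?case using Suc by simp
qed

lemma muT: "x \<in> cube n \<Longrightarrow> mu T x = pp x"
proof -
  assume x: "x \<in> cube n"
  have "w T i = pp (pti i)" if i: "i \<in> Idx" for i
  proof -
    obtain g cb t where it: "i = (g,cb,t)" "t < 2^d" using i by (auto simp: Idx_def)
    have "tl g cb T = pp (pt g cb T)" using T_Suc by (simp add: tl_def flip: T_Suc)
    moreover have "t \<le> T" using it(2) T_Suc by linarith
    ultimately show ?thesis using it by (auto simp: w_def pti_def)
  qed
  then have "mu T x = (\<Sum>i\<in>Idx. if pti i = x then pp (pti i) else 0)" unfolding mu_def by (intro sum.cong) auto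
  also have "\<dots> = pp x" using sum_pti[OF x, of "\<lambda>i. pp (pti i)"] x pti_surj pti_inj
    by (simp add: f_the_inv_into_f)
  finally show ?thesis .
qed

end


lemma energy_decomp: "rbm_energy n W B C v h = (\<Sum>k<n. B k * of_bool (v k)) +
   (\<Sum>j<n. of_bool (h j) * (C j + (\<Sum>k<n. W j k * of_bool (v k))))"
  unfolding rbm_energy_def distrib_left sum.distrib sum_distrib_left
  by (simp only: mult.assoc mult.commute mult.left_commute add.assoc add.commute add.left_commute)

context sch begin

definition hid :: "nat \<Rightarrow> nat \<Rightarrow> bool" where "hid g = (\<lambda>k. g \<noteq> 0 \<and> k = g - 1)"
definition coef :: "nat \<Rightarrow> nat \<Rightarrow> real" where "coef g k = (if k = d then 0 else if pt g False 0 k then -1 else 1)"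
definition c0 :: "nat \<Rightarrow> real" where "c0 g = (\<Sum>k<n. if k = d then 0 else if pt g False 0 k then 1 else 0)"
definition dist :: "nat \<Rightarrow> (nat \<Rightarrow> bool) \<Rightarrow> real" where "dist g v = c0 g + (\<Sum>k<n. coef g k * of_bool (v k))"
definition lam :: real where "lam = 2 * real n + 1"
definition DD :: "nat \<Rightarrow> (nat \<Rightarrow> bool) \<Rightarrow> real" where
  "DD j v = (if Suc j < d then dist 0 v - lam * dist (Suc j) v else - lam)"
definition EU :: "(nat \<Rightarrow> bool) \<Rightarrow> (nat \<Rightarrow> bool) \<Rightarrow> real" where
  "EU v h = - dist 0 v + (\<Sum>j<n. of_bool (h j) * DD j v)"
definition BU :: "nat \<Rightarrow> real" where "BU k = - coef 0 k"
definition WU :: "nat \<Rightarrow> nat \<Rightarrow> real" where "WU j k = (if Suc j < d then coef 0 k - lam * coef (Suc j) k else 0)"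
definition CU :: "nat \<Rightarrow> real" where "CU j = (if Suc j < d then c0 0 - lam * c0 (Suc j) else - lam)"

lemma EU_energy: "rbm_energy n WU BU CU v h = EU v h + c0 0"
proof -
  have a: "(\<Sum>k<n. BU k * of_bool (v k)) = - dist 0 v + c0 0"
    by (simp add: BU_def dist_def sum_negf)
  have b: "CU j + (\<Sum>k<n. WU j k * of_bool (v k)) = DD j v" for j
    by (simp add: CU_def WU_def DD_def dist_def sum_subtractf sum_distrib_left algebra_simps mult.assoc)
  show ?thesis unfolding energy_decomp a b EU_def by simp
qed

lemma dist_alt: "dist g v = (\<Sum>k<n. if k = d then 0 else if pt g False 0 k then 1 - of_bool (v k) else of_bool (v k))"
  unfolding dist_def c0_def coef_def sum.distrib[symmetric] by (intro sum.cong) auto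

lemma dist_nonneg: "0 \<le> dist g v" unfolding dist_alt by (intro sum_nonneg) auto

lemma dist_le: "dist g v \<le> real n"
proof -
  have "dist g v \<le> (\<Sum>k<n. 1)" unfolding dist_alt by (intro sum_mono) auto
  then show ?thesis by simp
qed

lemma dist_ge1: "dist g v \<noteq> 0 \<Longrightarrow> 1 \<le> dist g v"
proof -
  assume a: "dist g v \<noteq> 0"
  define tt where "tt k = (if k = d then 0 else if pt g False 0 k then 1 - of_bool (v k) else (of_bool (v k) :: real))" for k
  have dt: "dist g v = (\<Sum>k<n. tt k)" unfolding dist_alt tt_def ..
  have "\<exists>k<n. tt k \<noteq> 0"
  proof (rule ccontr)
    assume "\<not> (\<exists>k<n. tt k \<noteq> 0)"
    then have "dist g v = 0" unfolding dt by (intro sum.neutral) auto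
    then show False using a by simp
  qed
  then obtain k where k: "k < n" "tt k \<noteq> 0" by auto
  then have "tt k = 1" by (auto simp: tt_def split: if_splits)
  moreover have "tt k \<le> dist g v" unfolding dt using k by (intro member_le_sum) (auto simp: tt_def)
  ultimately show ?thesis by simp
qed

lemma dist_zero:
  assumes v: "v \<in> cube n" and g: "g < d"
  shows "dist g v = 0 \<longleftrightarrow> (\<exists>cb. v = pt g cb 0)"
proof
  assume "dist g v = 0"
  then have a: "\<forall>k<n. k \<noteq> d \<longrightarrow> v k = pt g False 0 k"
    unfolding dist_alt by (subst (asm) sum_nonneg_eq_0_iff) (auto split: if_splits)
  have "v = pt g (v d) 0"
  proof
    fix k
    show "v k = pt g (v d) 0 k"
    proof (cases "k < n")
      case True then show ?thesis using a by (subst pt_upd) auto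
    next
      case False then show ?thesis using v pt_cube[OF g, of "v d" 0] by (auto simp: cube_def)
    qed
  qed
  then show "\<exists>cb. v = pt g cb 0" ..
next
  assume "\<exists>cb. v = pt g cb 0"
  then obtain cb where "v = pt g cb 0" ..
  then have "\<forall>k. k \<noteq> d \<longrightarrow> v k = pt g False 0 k" by (subst (asm) pt_upd) auto
  then show "dist g v = 0" unfolding dist_alt by (intro sum.neutral) auto
qed

lemma hid_cube: "g < d \<Longrightarrow> hid g \<in> cube n"
  using d_lt_n by (auto simp: hid_def cube_def)

lemma DD_le: "DD j v \<le> real n"
proof -
  have "0 \<le> lam * dist (Suc j) v" using dist_nonneg[of "Suc j" v] by (simp add: lam_def)
  then show ?thesis using dist_le[of 0 v] by (auto simp: DD_def lam_def)
qed

lemma DD_ns: "\<not> (Suc j < d \<and> dist (Suc j) v = 0) \<Longrightarrow> DD j v \<le> real n - lam"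
proof -
  assume a: "\<not> (Suc j < d \<and> dist (Suc j) v = 0)"
  show ?thesis
  proof (cases "Suc j < d")
    case True
    then have "1 \<le> dist (Suc j) v" using a dist_ge1 by auto
    then have "lam \<le> lam * dist (Suc j) v" by (simp add: lam_def)
    then show ?thesis using True dist_le[of 0 v] by (simp add: DD_def)
  next
    case False then show ?thesis by (simp add: DD_def)
  qed
qed

lemma EU_Hs: "EU v h = - dist 0 v + (\<Sum>j\<in>{j\<in>{..<n}. h j}. DD j v)"
proof -
  have "(\<Sum>j<n. of_bool (h j) * DD j v) = (\<Sum>j<n. if h j then DD j v else 0)" by (intro sum.cong) auto
  also have "\<dots> = (\<Sum>j\<in>{j\<in>{..<n}. h j}. DD j v)" by (rule sum.inter_filter[symmetric]) simp
  finally show ?thesis unfolding EU_def by simp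
qed

lemma EU_le_eq:
  assumes v: "v \<in> cube n" and h: "h \<in> cube n"
  shows "EU v h \<le> 0 \<and> (EU v h = 0 \<longleftrightarrow> (\<exists>g<d. \<exists>cb. v = pt g cb 0 \<and> h = hid g))"
proof -
  define Hs where "Hs = {j\<in>{..<n}. h j}"
  have fin: "finite Hs" by (simp add: Hs_def)
  have e: "EU v h = - dist 0 v + (\<Sum>j\<in>Hs. DD j v)" unfolding EU_Hs Hs_def ..
  have hHs: "h = (\<lambda>k. k \<in> Hs)" using h by (auto simp: Hs_def cube_def fun_eq_iff) (meson not_le)
  have d0: "0 \<le> dist 0 v" by (rule dist_nonneg)
  have cs: "Hs = {} \<or> (\<exists>j. Hs = {j}) \<or> card Hs \<ge> 2"
  proof -
    have "card Hs = 0 \<or> card Hs = 1 \<or> card Hs \<ge> 2" by linarith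
    then show ?thesis using fin card_1_singleton_iff[of Hs] by auto
  qed
  then consider "Hs = {}" | j where "Hs = {j}" | "card Hs \<ge> 2" by blast
  then show ?thesis
  proof cases
    case 1
    then have eu: "EU v h = - dist 0 v" using e by simp
    have h0: "h = hid 0" using hHs 1 by (auto simp: hid_def)
    have gg: "g = 0" if "h = hid g" for g
    proof (rule ccontr)
      assume "g \<noteq> 0"
      then have "hid g (g - 1)" by (simp add: hid_def)
      then have "h (g - 1)" using that by simp
      then show False using h0 by (simp add: hid_def)
    qed
    have "(\<exists>g<d. \<exists>cb. v = pt g cb 0 \<and> h = hid g) \<longleftrightarrow> (\<exists>cb. v = pt 0 cb 0)"
    proof
      assume "\<exists>cb. v = pt 0 cb 0"
      moreover have "0 < d" using d_pos by simp
      ultimately show "\<exists>g<d. \<exists>cb. v = pt g cb 0 \<and> h = hid g" using h0 by blast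
    qed (use gg in auto)
    then show ?thesis using eu d0 dist_zero[OF v, of 0] d_pos by auto
  next
    case 2
    then have jn: "j < n" by (auto simp: Hs_def)
    have hj: "h = (\<lambda>k. k = j)" using hHs 2 by auto
    have eu: "EU v h = (if Suc j < d then - lam * dist (Suc j) v else - dist 0 v - lam)"
      using e 2 by (simp add: DD_def)
    have iff: "(\<exists>g<d. \<exists>cb. v = pt g cb 0 \<and> h = hid g) \<longleftrightarrow> (Suc j < d \<and> (\<exists>cb. v = pt (Suc j) cb 0))"
    proof
      assume "\<exists>g<d. \<exists>cb. v = pt g cb 0 \<and> h = hid g"
      then obtain g cb where g: "g < d" "v = pt g cb 0" "h = hid g" by auto
      then have "g = Suc j" using hj by (cases g) (auto simp: hid_def fun_eq_iff)
      then show "Suc j < d \<and> (\<exists>cb. v = pt (Suc j) cb 0)" using g by auto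
    next
      assume "Suc j < d \<and> (\<exists>cb. v = pt (Suc j) cb 0)"
      then show "\<exists>g<d. \<exists>cb. v = pt g cb 0 \<and> h = hid g" using hj by (auto simp: hid_def intro!: exI[of _ "Suc j"])
    qed
    have lp: "lam > 0" by (simp add: lam_def)
    show ?thesis
    proof (cases "Suc j < d")
      case True
      have dn: "0 \<le> dist (Suc j) v" by (rule dist_nonneg)
      then show ?thesis using eu True lp iff dist_zero[OF v True] by (auto simp: mult_le_0_iff)
    next
      case False
      then show ?thesis using eu d0 lp iff by auto
    qed
  next
    case 3
    have "\<exists>j0\<in>Hs. \<forall>j\<in>Hs - {j0}. \<not> (Suc j < d \<and> dist (Suc j) v = 0)"
    proof (cases "\<exists>j\<in>Hs. Suc j < d \<and> dist (Suc j) v = 0")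
      case True
      then obtain j0 where j0: "j0 \<in> Hs" "Suc j0 < d" "dist (Suc j0) v = 0" by auto
      have "j = j0" if jj: "j \<in> Hs" "Suc j < d" "dist (Suc j) v = 0" for j
      proof -
        obtain cb where c1: "v = pt (Suc j) cb 0" using dist_zero[OF v jj(2)] jj(3) by auto
        obtain cb' where c2: "v = pt (Suc j0) cb' 0" using dist_zero[OF v j0(2)] j0(3) by auto
        show ?thesis using pt_inj[OF jj(2) j0(2), of 0 0 cb cb'] c1 c2 by auto
      qed
      then show ?thesis using j0 by blast
    next
      case False
      have "Hs \<noteq> {}" using 3 by auto
      then obtain j0 where "j0 \<in> Hs" by auto
      then show ?thesis using False by blast
    qed
    then obtain j0 where j0: "j0 \<in> Hs" and ns: "\<forall>j\<in>Hs - {j0}. \<not> (Suc j < d \<and> dist (Suc j) v = 0)" by blast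
    have c: "card (Hs - {j0}) \<ge> 1" using 3 j0 fin by (simp add: card_Diff_singleton)
    have "(\<Sum>j\<in>Hs. DD j v) = DD j0 v + (\<Sum>j\<in>Hs - {j0}. DD j v)" using j0 fin by (simp add: sum.remove)
    also have "(\<Sum>j\<in>Hs - {j0}. DD j v) \<le> real (card (Hs - {j0})) * (real n - lam)"
      using ns DD_ns by (intro sum_bounded_above) auto
    also have "real (card (Hs - {j0})) * (real n - lam) \<le> 1 * (real n - lam)"
      using c by (intro mult_right_mono_neg) (auto simp: lam_def)
    finally have "(\<Sum>j\<in>Hs. DD j v) \<le> -1" using DD_le[of j0 v] by (simp add: lam_def)
    then have eu: "EU v h \<le> -1" using e d0 by simp
    have "\<not> (\<exists>g<d. \<exists>cb. v = pt g cb 0 \<and> h = hid g)"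
    proof
      assume "\<exists>g<d. \<exists>cb. v = pt g cb 0 \<and> h = hid g"
      then obtain g where "h = hid g" by auto
      then have "Hs \<subseteq> {g - 1}" using hHs by (auto simp: hid_def fun_eq_iff)
      then have "card Hs \<le> card {g - 1}" by (intro card_mono) auto
      then have "card Hs \<le> 1" by simp
      then show False using 3 by simp
    qed
    then show ?thesis using eu by simp
  qed
qed

end


context sch begin

definition bf :: "nat \<Rightarrow> real" where "bf g = ln (tl g True 0) - ln (tl g False 0)"
definition gm :: "nat \<Rightarrow> real" where "gm g = ln (tl g False 0) - ln (tl 0 False 0)"
definition BV :: "nat \<Rightarrow> real" where "BV k = (if k = d then bf 0 else 0)"
definition WV :: "nat \<Rightarrow> nat \<Rightarrow> real" where "WV j k = (if Suc j < d \<and> k = d then bf (Suc j) - bf 0 else 0)"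
definition CV :: "nat \<Rightarrow> real" where "CV j = (if Suc j < d then gm (Suc j) else 0)"

lemma EV_root:
  assumes g: "g < d"
  shows "rbm_energy n WV BV CV (pt g cb 0) (hid g) = ln (tl g cb 0) - ln (tl 0 False 0)"
proof -
  have b: "(\<Sum>k<n. BV k * of_bool (pt g cb 0 k)) = bf 0 * of_bool cb"
  proof -
    have "(\<Sum>k<n. BV k * of_bool (pt g cb 0 k)) = (\<Sum>k<n. (if k = d then bf 0 else 0) * of_bool (pt g cb 0 k))"
      by (simp add: BV_def)
    also have "\<dots> = bf 0 * of_bool (pt g cb 0 d)" by (rule xj_lin[OF d_lt_n, symmetric])
    finally show ?thesis by (simp add: pt_d)
  qed
  have w: "CV j + (\<Sum>k<n. WV j k * of_bool (pt g cb 0 k)) = CV j + (if Suc j < d then bf (Suc j) - bf 0 else 0) * of_bool cb" for j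
  proof -
    have "(\<Sum>k<n. WV j k * of_bool (pt g cb 0 k)) = (\<Sum>k<n. (if k = d then (if Suc j < d then bf (Suc j) - bf 0 else 0) else 0) * of_bool (pt g cb 0 k))"
      by (intro sum.cong) (auto simp: WV_def)
    also have "\<dots> = (if Suc j < d then bf (Suc j) - bf 0 else 0) * of_bool (pt g cb 0 d)"
      by (rule xj_lin[OF d_lt_n, symmetric])
    finally show ?thesis by (simp add: pt_d)
  qed
  show ?thesis
  proof (cases "g = 0")
    case True
    then show ?thesis unfolding energy_decomp b by (cases cb) (auto simp: hid_def bf_def)
  next
    case False
    have gn: "g - 1 < n" using g d_lt_n by simp
    have "(\<Sum>j<n. of_bool (hid g j) * (CV j + (\<Sum>k<n. WV j k * of_bool (pt g cb 0 k))))
        = (\<Sum>j<n. if j = g - 1 then CV (g - 1) + (if Suc (g-1) < d then bf (Suc (g-1)) - bf 0 else 0) * of_bool cb else 0)"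
      unfolding w using False by (intro sum.cong) (auto simp: hid_def)
    also have "\<dots> = gm g + (bf g - bf 0) * of_bool cb" using gn False g by (simp add: CV_def)
    finally have e: "(\<Sum>j<n. of_bool (hid g j) * (CV j + (\<Sum>k<n. WV j k * of_bool (pt g cb 0 k)))) = gm g + (bf g - bf 0) * of_bool cb" .
    show ?thesis unfolding energy_decomp b e by (cases cb) (auto simp: bf_def gm_def)
  qed
qed

definition WK :: "nat \<Rightarrow> nat \<Rightarrow> nat \<Rightarrow> real" where "WK K j k = real K * WU j k + WV j k"
definition BK :: "nat \<Rightarrow> nat \<Rightarrow> real" where "BK K k = real K * BU k + BV k"
definition CK :: "nat \<Rightarrow> nat \<Rightarrow> real" where "CK K j = real K * CU j + CV j"

lemma energy_K: "rbm_energy n (WK K) (BK K) (CK K) v h = real K * (EU v h + c0 0) + rbm_energy n WV BV CV v h"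
proof -
  have "rbm_energy n (WK K) (BK K) (CK K) v h = real K * rbm_energy n WU BU CU v h + rbm_energy n WV BV CV v h"
    unfolding rbm_energy_def WK_def BK_def CK_def
    by (simp only: distrib_left distrib_right sum.distrib sum_distrib_left mult.assoc mult.commute mult.left_commute add.assoc add.commute add.left_commute)
  then show ?thesis using EU_energy by simp
qed

definition Gi :: "(nat \<times> bool) set" where "Gi = {..<d} \<times> UNIV"
definition Rst :: "(nat \<Rightarrow> bool) \<Rightarrow> (nat \<Rightarrow> bool) \<Rightarrow> real" where
  "Rst v h = (\<Sum>(g,cb)\<in>Gi. if v = pt g cb 0 \<and> h = hid g then tl g cb 0 else 0)"

lemma sum_Gi: "(\<Sum>(g,cb)\<in>Gi. F g cb) = (\<Sum>g<d. \<Sum>cb\<in>UNIV. F g cb)"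
  unfolding Gi_def by (rule sum.cartesian_product[symmetric])

lemma sum_tl: "(\<Sum>(g,cb)\<in>Gi. tl g cb 0) = 1"
proof -
  have "(\<Sum>(g,cb)\<in>Gi. tl g cb 0) = (\<Sum>g<d. \<Sum>cb\<in>UNIV. \<Sum>t<2^d. pp (pt g cb t))"
    unfolding sum_Gi tl_def atLeast0LessThan ..
  also have "\<dots> = (\<Sum>x\<in>cube n. pp x)" unfolding sum_cube_pti sum_Idx by (simp add: pti_def)
  finally show ?thesis using psum by simp
qed

lemma tl0_pos: "g < d \<Longrightarrow> tl g cb 0 > 0" using tl_pos by simp

lemma rbm_lim:
  assumes v: "v \<in> cube n" and h: "h \<in> cube n"
  shows "((\<lambda>K. rbm_prob n (WK K) (BK K) (CK K) v h) \<longlongrightarrow> Rst v h) sequentially"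
proof -
  define S where "S = cube n \<times> cube n"
  define U where "U = (\<lambda>s. EU (fst s) (snd s) + c0 0)"
  define V where "V = (\<lambda>s. rbm_energy n WV BV CV (fst s) (snd s))"
  have rw: "rbm_prob n (WK K) (BK K) (CK K) v h = exp (real K * U (v,h) + V (v,h)) / (\<Sum>s\<in>S. exp (real K * U s + V s))" for K
    unfolding rbm_prob_def energy_K S_def U_def V_def by (simp add: case_prod_unfold)
  have ub: "\<forall>s\<in>S. U s \<le> c0 0" using EU_le_eq by (auto simp: S_def U_def)
  have ex0: "\<exists>g<d. \<exists>cb. pt 0 False 0 = pt g cb 0 \<and> hid 0 = hid g"
    using d_pos by (intro exI[of _ 0]) auto
  have s0: "(pt 0 False 0, hid 0) \<in> S" "U (pt 0 False 0, hid 0) = c0 0"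
    using pt_cube hid_cube d_pos EU_le_eq[OF pt_cube hid_cube, of 0 0 False 0] ex0 by (auto simp: S_def U_def)
  have lim: "((\<lambda>K. rbm_prob n (WK K) (BK K) (CK K) v h) \<longlongrightarrow>
      (if U (v,h) = c0 0 then exp (V (v,h)) else 0) / (\<Sum>s\<in>{s\<in>S. U s = c0 0}. exp (V s))) sequentially"
    unfolding rw using v h by (intro softmax_lim[OF _ _ ub s0]) (auto simp: S_def finite_cube)
  define emb where "emb = (\<lambda>(g,cb). (pt g cb (0::nat), hid g))"
  have J: "{s\<in>S. U s = c0 0} = emb ` Gi"
  proof
    show "{s\<in>S. U s = c0 0} \<subseteq> emb ` Gi"
      using EU_le_eq by (force simp: S_def U_def emb_def Gi_def)
    show "emb ` Gi \<subseteq> {s\<in>S. U s = c0 0}"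
      using EU_le_eq pt_cube hid_cube by (force simp: S_def U_def emb_def Gi_def)
  qed
  have inj: "inj_on emb Gi"
    using pt_inj by (force simp: inj_on_def emb_def Gi_def)
  define r where "r = tl 0 False 0"
  have r: "r > 0" using tl0_pos d_pos by (simp add: r_def)
  have ev: "exp (V (emb gc)) = tl (fst gc) (snd gc) 0 / r" if "gc \<in> Gi" for gc
    using that EV_root tl0_pos r by (auto simp: emb_def V_def Gi_def r_def exp_diff)
  have den: "(\<Sum>s\<in>{s\<in>S. U s = c0 0}. exp (V s)) = 1 / r"
  proof -
    have "(\<Sum>s\<in>{s\<in>S. U s = c0 0}. exp (V s)) = (\<Sum>gc\<in>Gi. exp (V (emb gc)))"
      unfolding J by (rule sum.reindex[OF inj, unfolded comp_def])
    also have "\<dots> = (\<Sum>gc\<in>Gi. tl (fst gc) (snd gc) 0 / r)" using ev by (intro sum.cong) auto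
    also have "\<dots> = (\<Sum>(g,cb)\<in>Gi. tl g cb 0) / r" by (simp add: sum_divide_distrib case_prod_unfold)
    finally show ?thesis using sum_tl by simp
  qed
  have val: "(if U (v,h) = c0 0 then exp (V (v,h)) else 0) / (\<Sum>s\<in>{s\<in>S. U s = c0 0}. exp (V s)) = Rst v h"
  proof (cases "U (v,h) = c0 0")
    case True
    then obtain g cb where gc: "g < d" "v = pt g cb 0" "h = hid g"
      using EU_le_eq[OF v h] by (auto simp: U_def)
    have "exp (V (v,h)) = tl g cb 0 / r" using ev[of "(g,cb)"] gc by (simp add: emb_def Gi_def)
    moreover have "Rst v h = tl g cb 0"
    proof -
      have "Rst v h = (\<Sum>gc\<in>Gi. if (case gc of (g',cb') \<Rightarrow> v = pt g' cb' 0 \<and> h = hid g') then tl (fst gc) (snd gc) 0 else 0)"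
        unfolding Rst_def by (intro sum.cong) (auto simp: case_prod_unfold)
      also have "\<dots> = tl (fst (g,cb)) (snd (g,cb)) 0"
        using gc pt_inj[OF gc(1), of _ 0 0 cb] by (intro sum_uniq) (auto simp: Gi_def finite_cartesian_product)
      finally show ?thesis by simp
    qed
    ultimately show ?thesis using True den r by simp
  next
    case False
    have "Rst v h = 0" unfolding Rst_def
    proof (intro sum.neutral ballI)
      fix gc assume "gc \<in> Gi"
      then show "(case gc of (g, cb) \<Rightarrow> if v = pt g cb 0 \<and> h = hid g then tl g cb 0 else 0) = 0"
        using False EU_le_eq[OF v h] by (auto simp: U_def Gi_def)
    qed
    then show ?thesis using False by simp
  qed
  show ?thesis using lim unfolding val .
qed

end


context sch begin

definition Gst :: "(nat \<Rightarrow> bool) \<Rightarrow> real" where "Gst y = (\<Sum>h\<in>cube n. Rst y h)"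

lemma Gst_mu0: "y \<in> cube n \<Longrightarrow> Gst y = mu 0 y"
proof -
  assume y: "y \<in> cube n"
  have "Gst y = (\<Sum>gc\<in>Gi. \<Sum>h\<in>cube n. if y = pt (fst gc) (snd gc) 0 \<and> h = hid (fst gc) then tl (fst gc) (snd gc) 0 else 0)"
    unfolding Gst_def Rst_def case_prod_unfold by (rule sum.swap)
  also have "\<dots> = (\<Sum>gc\<in>Gi. if y = pt (fst gc) (snd gc) 0 then tl (fst gc) (snd gc) 0 else 0)"
  proof (intro sum.cong refl)
    fix gc assume "gc \<in> Gi"
    then have "hid (fst gc) \<in> cube n" using hid_cube by (auto simp: Gi_def)
    then show "(\<Sum>h\<in>cube n. if y = pt (fst gc) (snd gc) 0 \<and> h = hid (fst gc) then tl (fst gc) (snd gc) 0 else 0)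
       = (if y = pt (fst gc) (snd gc) 0 then tl (fst gc) (snd gc) 0 else 0)"
      using finite_cube by (cases "y = pt (fst gc) (snd gc) 0") (simp_all add: sum.delta')
  qed
  also have "\<dots> = (\<Sum>g<d. \<Sum>cb\<in>UNIV. if y = pt g cb 0 then tl g cb 0 else 0)"
    by (rule sum_Gi[unfolded case_prod_unfold])
  also have "\<dots> = (\<Sum>g<d. \<Sum>cb\<in>UNIV. \<Sum>t<2^d. if pt g cb t = y then w 0 (g,cb,t) else 0)"
  proof (intro sum.cong refl)
    fix g cb
    have "(\<Sum>t<2^d. if pt g cb t = y then w 0 (g,cb,t) else 0) = (\<Sum>t::nat<2^d. if t = 0 then (if pt g cb 0 = y then tl g cb 0 else 0) else 0)"
      by (intro sum.cong) (auto simp: w_def)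
    also have "\<dots> = (if y = pt g cb 0 then tl g cb 0 else 0)" by auto
    finally show "(if y = pt g cb 0 then tl g cb 0 else 0) = (\<Sum>t<2^d. if pt g cb t = y then w 0 (g,cb,t) else 0)" by simp
  qed
  also have "\<dots> = mu 0 y" unfolding mu_def sum_Idx by (simp add: pti_def)
  finally show ?thesis .
qed

definition WsK :: "nat \<Rightarrow> nat \<Rightarrow> nat \<Rightarrow> nat \<Rightarrow> real" where
  "WsK K i j k = real K * cU (T - 1 - i) j k + cV (T - 1 - i) j k"
definition csK :: "nat \<Rightarrow> nat \<Rightarrow> nat \<Rightarrow> real" where
  "csK K i j = real K * c0U (T - 1 - i) j + c0V (T - 1 - i) j"

lemma pre_eq: "j < n \<Longrightarrow> (\<Sum>k<n. WsK K i j k * of_bool (y k)) + csK K i j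
   = real K * UU (T - 1 - i) j y + VV (T - 1 - i) j y"
proof -
  assume j: "j < n"
  show ?thesis
    unfolding WsK_def csK_def UU_lin[OF j] VV_lin distrib_right sum.distrib distrib_left sum_distrib_left mult.assoc
    by (simp only: add.assoc add.commute add.left_commute)
qed

lemma cond_lim: "((\<lambda>K. cond_prob n (WsK K i) (csK K i) z y) \<longlongrightarrow> kst i z y) sequentially"
proof -
  have e: "cond_prob n (WsK K i) (csK K i) z y = (\<Prod>j<n. if z j then sigmoid (real K * UU (T - 1 - i) j y + VV (T - 1 - i) j y)
      else 1 - sigmoid (real K * UU (T - 1 - i) j y + VV (T - 1 - i) j y))" for K
    unfolding cond_prob_def Let_def by (intro prod.cong refl) (simp only: lessThan_iff pre_eq)
  have f: "((\<lambda>K. if z j then sigmoid (real K * UU (T - 1 - i) j y + VV (T - 1 - i) j y)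
      else 1 - sigmoid (real K * UU (T - 1 - i) j y + VV (T - 1 - i) j y)) \<longlongrightarrow>
      (if z j then pj (T - 1 - i) j y else 1 - pj (T - 1 - i) j y)) sequentially" for j
  proof -
    have sl: "((\<lambda>K. sigmoid (real K * UU (T - 1 - i) j y + VV (T - 1 - i) j y)) \<longlongrightarrow> pj (T - 1 - i) j y) sequentially"
      unfolding pj_def by (rule sig_lim)
    show ?thesis using sl tendsto_diff[OF tendsto_const sl, of 1] by (cases "z j") simp_all
  qed
  show ?thesis unfolding e kst_def kk_def
    by (intro tendsto_prod f)
qed

end


context sch begin

lemma dbn_lim:
  assumes x: "x \<in> cube n"
  shows "((\<lambda>K. dbn_visible n (Suc T) (WK K) (BK K) (CK K) (WsK K) (csK K) x) \<longlongrightarrow> pp x) sequentially"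
proof -
  define C where "C = cube n"
  have ins: "{1..Suc T} = insert (Suc T) {1..T}" by auto
  have e: "dbn_visible n (Suc T) (WK K) (BK K) (CK K) (WsK K) (csK K) x =
    (\<Sum>H\<in>PiE {1..Suc T} (\<lambda>_. C). rbm_prob n (WK K) (BK K) (CK K) ((H(0:=x)) T) ((H(0:=x)) (Suc T)) *
       (\<Prod>i<T. cond_prob n (WsK K i) (csK K i) ((H(0:=x)) i) ((H(0:=x)) (Suc i))))" for K
    unfolding dbn_visible_def dbn_joint_def C_def by simp
  have memb: "(H(0:=x)) i \<in> cube n" if "H \<in> PiE {1..Suc T} (\<lambda>_. C)" "i \<le> Suc T" for H i
    using x that by (cases "i = 0") (auto simp: C_def PiE_def Pi_def)
  have lim1: "((\<lambda>K. dbn_visible n (Suc T) (WK K) (BK K) (CK K) (WsK K) (csK K) x) \<longlongrightarrow>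
     (\<Sum>H\<in>PiE {1..Suc T} (\<lambda>_. C). Rst ((H(0:=x)) T) ((H(0:=x)) (Suc T)) *
       (\<Prod>i<T. kst i ((H(0:=x)) i) ((H(0:=x)) (Suc i))))) sequentially"
    unfolding e by (intro tendsto_sum tendsto_mult tendsto_prod rbm_lim cond_lim memb) auto
  have "(\<Sum>H\<in>PiE {1..Suc T} (\<lambda>_. C). Rst ((H(0:=x)) T) ((H(0:=x)) (Suc T)) *
       (\<Prod>i<T. kst i ((H(0:=x)) i) ((H(0:=x)) (Suc i))))
     = (\<Sum>g\<in>PiE {1..T} (\<lambda>_. C). Gst ((g(0:=x)) T) * (\<Prod>i<T. kst i ((g(0:=x)) i) ((g(0:=x)) (Suc i))))"
  proof -
    have a: "((g(Suc T := y))(0 := x)) i = (g(0:=x)) i" if "i \<le> T" for g y i using that by auto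
    have b: "((g(Suc T := y))(0 := x)) (Suc T) = y" for g y by simp
    have p: "(\<Prod>i<T. kst i (((g(Suc T := y))(0 := x)) i) (((g(Suc T := y))(0 := x)) (Suc i)))
        = (\<Prod>i<T. kst i ((g(0:=x)) i) ((g(0:=x)) (Suc i)))" for g y
      by (intro prod.cong refl) (simp add: a)
    have "(\<Sum>H\<in>PiE {1..Suc T} (\<lambda>_. C). Rst ((H(0:=x)) T) ((H(0:=x)) (Suc T)) *
       (\<Prod>i<T. kst i ((H(0:=x)) i) ((H(0:=x)) (Suc i))))
      = (\<Sum>g\<in>PiE {1..T} (\<lambda>_. C). \<Sum>y\<in>C. Rst (((g(Suc T := y))(0 := x)) T) (((g(Suc T := y))(0 := x)) (Suc T)) *
       (\<Prod>i<T. kst i (((g(Suc T := y))(0 := x)) i) (((g(Suc T := y))(0 := x)) (Suc i))))"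
      unfolding ins by (rule sum_PiE_insert) simp
    also have "\<dots> = (\<Sum>g\<in>PiE {1..T} (\<lambda>_. C). Gst ((g(0:=x)) T) * (\<Prod>i<T. kst i ((g(0:=x)) i) ((g(0:=x)) (Suc i))))"
    proof (intro sum.cong refl)
      fix g
      have "(\<Sum>y\<in>C. Rst (((g(Suc T := y))(0 := x)) T) (((g(Suc T := y))(0 := x)) (Suc T)) *
       (\<Prod>i<T. kst i (((g(Suc T := y))(0 := x)) i) (((g(Suc T := y))(0 := x)) (Suc i))))
        = (\<Sum>y\<in>C. Rst ((g(0:=x)) T) y * (\<Prod>i<T. kst i ((g(0:=x)) i) ((g(0:=x)) (Suc i))))"
        by (intro sum.cong refl) (simp only: a[OF order_refl] b p)
      also have "\<dots> = Gst ((g(0:=x)) T) * (\<Prod>i<T. kst i ((g(0:=x)) i) ((g(0:=x)) (Suc i)))"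
        by (simp add: Gst_def C_def sum_distrib_right)
      finally show "(\<Sum>y\<in>C. Rst (((g(Suc T := y))(0 := x)) T) (((g(Suc T := y))(0 := x)) (Suc T)) *
       (\<Prod>i<T. kst i (((g(Suc T := y))(0 := x)) i) (((g(Suc T := y))(0 := x)) (Suc i))))
        = Gst ((g(0:=x)) T) * (\<Prod>i<T. kst i ((g(0:=x)) i) ((g(0:=x)) (Suc i)))" .
    qed
    finally show ?thesis .
  qed
  also have "\<dots> = down kst C T Gst x" by (rule chain)
  also have "\<dots> = down kst C T (mu 0) x" using Gst_mu0 x unfolding C_def by (intro down_cong) auto
  also have "\<dots> = mu T x" using iter[of T x] x unfolding C_def by simp
  also have "\<dots> = pp x" using muT x by simp
  finally show ?thesis using lim1 by simp
qed

end


theorem theorem2: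
  fixes b n m :: nat and p :: "(nat \<Rightarrow> bool) \<Rightarrow> real" and \<epsilon> :: real
  assumes "b \<ge> 1"
    and "n = 2 ^ b div 2 + b"
    and "real m = 2 ^ n / (2 * real (n - b))"
    and "is_distribution n p"
    and "\<epsilon> > 0"
  shows "\<exists>W B C Ws cs. KL_div n p (dbn_visible n m W B C Ws cs) < ereal \<epsilon>"
proof -
  define d where "d = n - b"
  have bd: "2 * d = 2^b" using assms(1,2) by (cases b) (auto simp: d_def)
  have d2: "d = 2^(b-1)" using bd assms(1) by (cases b) auto
  have neq: "n = d + b" using assms(2) by (simp add: d_def)
  have r2: "2 * real d = 2^b"
  proof -
    have "real (2 * d) = real (2^b)" by (simp only: bd)
    then show ?thesis by simp
  qed
  have "real m = 2^n / 2^b" using assms(3) r2 by (simp add: d_def)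
  also have "\<dots> = 2^d" by (simp add: neq power_add)
  finally have "real m = real (2^d)" by simp
  then have m: "m = 2^d" by (simp only: of_nat_eq_iff)
  obtain P \<delta> where Pc: "\<forall>t<2^d. P t \<in> cube d" and Pi: "inj_on P {..<2^d}" and P0: "P 0 = (\<lambda>_. False)"
    and Ps: "\<forall>t. Suc t < 2^d \<longrightarrow> \<delta> t < d \<and> P (Suc t) = (P t)(\<delta> t := \<not> P t (\<delta> t))"
    using gray_exists[of d] by blast
  obtain sel where selb: "bij_betw sel {0..<card (cube (b-1))} (cube (b-1))"
    using ex_bij_betw_nat_finite[OF finite_cube] by blast
  then have selb': "bij_betw sel {..<d} (cube (b-1))" by (simp add: card_cube d2 atLeast0LessThan)
  obtain pp where ppos: "\<forall>x\<in>cube n. pp x > 0" and psum: "(\<Sum>x\<in>cube n. pp x) = 1"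
    and small: "(\<Sum>x\<in>{x\<in>cube n. 0<p x}. p x * ln (p x / pp x)) < \<epsilon>"
    using pp_exists[OF assms(4,5)] by blast
  interpret S: sch d b n P \<delta> sel pp
    using neq assms(1) d2 Pc Pi P0 Ps selb' ppos psum by unfold_locales auto
  have mT: "m = Suc S.T" using m S.T_Suc by simp
  have "\<exists>K. KL_div n p ((\<lambda>K. dbn_visible n m (S.WK K) (S.BK K) (S.CK K) (S.WsK K) (S.csK K)) K) < ereal \<epsilon>"
    using S.dbn_lim mT by (intro KL_final[OF assms(4) ppos _ small]) auto
  then show ?thesis by blast
qed

end
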